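(* Let $k\ge 1$, let $n_0,n_1,\dots,n_k$ be positive integers, $n^{*}=n_0+n_1+\cdots+n_k$, and let $\sigma_0,\dots,\sigma_k>0$. Let $h:[0,\infty)\to[0,\infty)$ be a function such that $$\prod_{i=0}^{k}\sigma_i^{-n_i}\,h\!\left(\sum_{i=0}^{k}\sigma_i^{-2}\|\mathbf{x}_i\|^{2}\right)$$ is a probability density on $\mathbb{R}^{n^{*}}$, and let $(\mathbf{x}_0',\mathbf{x}_1',\dots,\mathbf{x}_k')'$, $\mathbf{x}_i\in\mathbb{R}^{n_i}$, be a random vector with this density. Define $s_0=\|\mathbf{x}_0\|^{2}$ and $\mathbf{t}_i=s_0^{-1/2}\mathbf{x}_i$ for $i=1,\dots,k$. Then $(s_0,\mathbf{t}_1,\dots,\mathbf{t}_k)$ has the density, with respect to Lebesgue measure on $(0,\infty)\times\mathbb{R}^{n_1}\times\cdots\times\mathbb{R}^{n_k}$, $$\frac{\pi^{n_0/2}}{\Gamma[n_0/2]\prod_{i=0}^{k}\sigma_i^{n_i}}\,s_0^{n^{*}/2-1}\,h\!\left(\sigma_0^{-2}\Big(1+\sigma_0^{2}\sum_{i=1}^{k}\sigma_i^{-2}\|\mathbf{t}_i\|^{2}\Big)s_0\right).$$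
   Context: $\|\cdot\|$ denotes the Euclidean norm. The density in the hypothesis is that of a zero-mean elliptically contoured distribution on $\mathbb{R}^{n^*}$ with block-diagonal scale matrix $\mathrm{diag}(\sigma_0^2\mathbf{I}_{n_0},\dots,\sigma_k^2\mathbf{I}_{n_k})$ and generator $h$. *)

theory Defs
  imports "HOL-Probability.Probability"
begin

text \<open>A vector in R^(n_0+...+n_k) is represented as a function on the index set
  of pairs (i,j) with i \<le> k and j < n i; component (i,j) is the j-th coordinate
  of the block x_i.\<close>

definition blk_idx :: "nat \<Rightarrow> (nat \<Rightarrow> nat) \<Rightarrow> (nat \<times> nat) set" where
  "blk_idx k n = {(i, j). i \<le> k \<and> j < n i}"

definition blk_idx1 :: "nat \<Rightarrow> (nat \<Rightarrow> nat) \<Rightarrow> (nat \<times> nat) set" where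
  "blk_idx1 k n = {(i, j). 1 \<le> i \<and> i \<le> k \<and> j < n i}"

definition blk_sqnorm :: "(nat \<Rightarrow> nat) \<Rightarrow> (nat \<times> nat \<Rightarrow> real) \<Rightarrow> nat \<Rightarrow> real" where
  "blk_sqnorm n x i = (\<Sum>j<n i. (x (i, j))\<^sup>2)"

end

theory Submission
  imports Defs
begin

lemma radial_distr:
  fixes J :: "'i set"
  assumes fin: "finite J" and ne: "J \<noteq> {}"
  shows "distr (PiM J (\<lambda>_. lborel)) borel (\<lambda>a. \<Sum>p\<in>J. (a p)\<^sup>2) =
         density lborel (\<lambda>s. ennreal (pi powr (real (card J) / 2) / Gamma (real (card J) / 2)
              * indicator {0<..} s * s powr (real (card J) / 2 - 1)))"
    (is "?D = density lborel ?w")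
proof -
  let ?P = "PiM J (\<lambda>_. lborel::real measure)"
  let ?R = "\<lambda>a. \<Sum>p\<in>J. (a p)\<^sup>2 :: real"
  define d where "d = real (card J)"
  have d0: "d > 0" using fin ne by (simp add: d_def card_gt_0_iff)
  define cst where "cst = pi powr (d / 2) / Gamma (d / 2)"
  have Rm[measurable]: "?R \<in> borel_measurable ?P" by measurable
  interpret F: finite_product_sigma_finite "\<lambda>_. lborel::real measure" J
    by standard (use fin in auto)
  have emD: "emeasure ?D {..x} = ennreal (unit_ball_vol d * x powr (d/2))" if "x > 0" for x
  proof -
    have "emeasure ?D {..x} = emeasure ?P ({f. sqrt (\<Sum>i\<in>J. (f i)\<^sup>2) \<le> sqrt x} \<inter> space ?P)"
      by (subst emeasure_distr) (auto intro!: arg_cong2[where f=emeasure] simp: real_sqrt_le_iff)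
    also have "\<dots> = ennreal (unit_ball_vol d * sqrt x ^ card J)"
      using emeasure_cball_aux[OF fin, of "sqrt x"] that by (simp add: d_def)
    also have "sqrt x ^ card J = x powr (d/2)"
      using that by (simp add: d_def powr_half_sqrt[symmetric] powr_realpow[symmetric] powr_powr)
    finally show ?thesis .
  qed
  have emD0: "emeasure ?D {..x} = 0" if "x \<le> 0" for x
  proof -
    have "emeasure ?D {..x} = emeasure ?P ({a. ?R a \<le> x} \<inter> space ?P)"
      by (subst emeasure_distr) (auto intro!: arg_cong2[where f=emeasure])
    also have "\<dots> \<le> emeasure ?P (PiE J (\<lambda>_. {0}))"
    proof (rule emeasure_mono)
      show "{a. ?R a \<le> x} \<inter> space ?P \<subseteq> PiE J (\<lambda>_. {0})"
      proof
        fix a assume a: "a \<in> {a. ?R a \<le> x} \<inter> space ?P"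
        have "?R a = 0" using a that by (auto intro!: antisym sum_nonneg)
        then have "\<forall>p\<in>J. (a p)\<^sup>2 = 0" using fin by (subst (asm) sum_nonneg_eq_0_iff) auto
        then show "a \<in> PiE J (\<lambda>_. {0})" using a by (auto simp: space_PiM PiE_iff extensional_def fun_eq_iff)
      qed
    qed (rule sets_PiM_I_finite, use fin in auto)
    also have "\<dots> = 0"
      using F.measure_times[of "\<lambda>_. {0}"] ne fin by (simp add: prod_zero card_gt_0_iff)
    finally show ?thesis by simp
  qed
  have cst0: "cst \<ge> 0" using d0 by (simp add: cst_def)
  have emW: "emeasure (density lborel ?w) {..x} = ennreal (unit_ball_vol d * x powr (d/2))" if "x > 0" for x
  proof -
    have "emeasure (density lborel ?w) {..x} = \<integral>\<^sup>+s. ?w s * indicator {..x} s \<partial>lborel"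
      by (subst emeasure_density) auto
    also have "\<dots> = \<integral>\<^sup>+s. ennreal (cst * (s powr (d/2 - 1) * indicator {0..x} s)) \<partial>lborel"
      by (intro nn_integral_cong) (auto simp: cst_def d_def indicator_def ennreal_mult'[symmetric])
    also have "\<dots> = ennreal cst * \<integral>\<^sup>+s. ennreal (s powr (d/2 - 1) * indicator {0..x} s) \<partial>lborel"
      using cst0 by (subst nn_integral_cmult[symmetric]) (simp_all add: ennreal_mult'[symmetric])
    also have "(\<integral>\<^sup>+s. ennreal (s powr (d/2 - 1) * indicator {0..x} s) \<partial>lborel) = ennreal (x powr (d/2) / (d/2))"
      using nn_integral_has_integral_lebesgue[OF _ has_integral_powr_from_0[of "d/2-1" x]] d0 that
      by (simp add: mult.commute)
    also have "ennreal cst * ennreal (x powr (d/2) / (d/2)) = ennreal (unit_ball_vol d * x powr (d/2))"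
    proof -
      have G: "Gamma (d/2 + 1) = (d/2) * Gamma (d/2)"
        using d0 by (subst Gamma_plus1) (auto simp: nonpos_Ints_def)
      have pos: "Gamma (d/2) > 0" using d0 by simp
      have "cst * (x powr (d/2) / (d/2)) = unit_ball_vol d * x powr (d/2)"
        unfolding cst_def unit_ball_vol_def G using d0 pos by (simp add: field_simps)
      then show ?thesis using cst0 by (simp add: ennreal_mult'[symmetric])
    qed
    finally show ?thesis .
  qed
  have emW0: "emeasure (density lborel ?w) {..x} = 0" if "x \<le> 0" for x
  proof -
    have "emeasure (density lborel ?w) {..x} = \<integral>\<^sup>+s. ?w s * indicator {..x} s \<partial>lborel"
      by (subst emeasure_density) auto
    also have "\<dots> = \<integral>\<^sup>+(s::real). 0 \<partial>lborel"
      by (intro nn_integral_cong) (use that in \<open>auto simp: indicator_def\<close>)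
    finally show ?thesis by simp
  qed
  have "sets (borel::real measure) = sets (sigma UNIV (range (\<lambda>x::real. {..x})))"
    by (rule arg_cong[where f=sets, OF borel_eq_atMost])
  then have SB: "sets (borel::real measure) = sigma_sets UNIV (range (\<lambda>x::real. {..x}))"
    by simp
  show ?thesis
  proof (rule measure_eqI_generator_eq_countable[where E="range (\<lambda>x. {..x})" and \<Omega>=UNIV
        and A="range (\<lambda>n::nat. {..real n})"])
    show "Int_stable (range (\<lambda>x::real. {..x}))"
      by (auto simp: Int_stable_def)
    show "sets ?D = sigma_sets UNIV (range (\<lambda>x. {..x}))"
      using SB by simp
    show "sets (density lborel ?w) = sigma_sets UNIV (range (\<lambda>x. {..x}))"
      using SB by simp
    fix X assume "X \<in> range (\<lambda>x::real. {..x})"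
    then obtain x where X: "X = {..x}" by auto
    show "emeasure ?D X = emeasure (density lborel ?w) X"
    proof (cases "x > 0")
      case True
      show ?thesis unfolding X emD[OF True] emW[OF True] ..
    next
      case False
      then have "x \<le> 0" by simp
      show ?thesis unfolding X emD0[OF \<open>x \<le> 0\<close>] emW0[OF \<open>x \<le> 0\<close>] ..
    qed
  next
    show "\<Union> (range (\<lambda>n::nat. {..real n})) = UNIV"
      by (auto intro: real_arch_simple)
    fix a assume "a \<in> range (\<lambda>n::nat. {..real n})"
    then obtain n :: nat where a: "a = {..real n}" by auto
    show "emeasure ?D a \<noteq> \<infinity>"
    proof (cases "n = 0")
      case True
      then show ?thesis unfolding a using emD0[of "real n"] by simp
    next
      case False
      then show ?thesis unfolding a using emD[of "real n"] by simp
    qed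
  qed auto
qed

lemma scale_PiM:
  fixes J :: "'i set" and c :: real
  assumes fin: "finite J" and c: "c > 0"
  shows "H \<in> borel_measurable (PiM J (\<lambda>_. lborel)) \<Longrightarrow>
    (\<integral>\<^sup>+x. H x \<partial>PiM J (\<lambda>_. lborel)) =
    ennreal (c ^ card J) * \<integral>\<^sup>+t. H (restrict (\<lambda>p. c * t p) J) \<partial>PiM J (\<lambda>_. lborel)"
  using fin
proof (induction J arbitrary: H rule: finite_induct)
  case empty
  interpret product_sigma_finite "\<lambda>_. lborel::real measure" by standard
  show ?case
    by (simp add: PiM_empty nn_integral_count_space_finite)
next
  case (insert i J)
  interpret product_sigma_finite "\<lambda>_. lborel::real measure" by standard
  interpret FJ: finite_product_sigma_finite "\<lambda>_. lborel::real measure" J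
    by standard (use insert in auto)
  interpret PS: pair_sigma_finite "PiM J (\<lambda>_. lborel::real measure)" "lborel::real measure"
    by (intro pair_sigma_finite.intro FJ.sigma_finite_measure_axioms lborel.sigma_finite_measure_axioms)
  let ?P = "\<lambda>J. PiM J (\<lambda>_. lborel::real measure)"
  have Hm[measurable]: "H \<in> borel_measurable (?P (insert i J))" by fact
  have upd[measurable]: "(\<lambda>z::('i \<Rightarrow> real) \<times> real. (fst z)(i := c * snd z)) \<in> measurable (?P J \<Otimes>\<^sub>M lborel) (?P (insert i J))"
    by (rule measurable_fun_upd[where J=J]) auto
  have upd1: "(\<lambda>y. x(i := y)) \<in> measurable lborel (?P (insert i J))" if "x \<in> space (?P J)" for x
    using measurable_component_update[OF that insert.hyps(2)] by simp
  have upd2: "(\<lambda>x. x(i := y)) \<in> measurable (?P J) (?P (insert i J))" for y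
    by (rule measurable_fun_upd[where J=J]) auto
  have "(\<integral>\<^sup>+x. H x \<partial>?P (insert i J)) = \<integral>\<^sup>+x. \<integral>\<^sup>+y. H (x(i := y)) \<partial>lborel \<partial>?P J"
    by (rule product_nn_integral_insert) (use insert in auto)
  also have "\<dots> = \<integral>\<^sup>+x. ennreal c * \<integral>\<^sup>+y. H (x(i := c * y)) \<partial>lborel \<partial>?P J"
  proof (rule nn_integral_cong)
    fix x assume x: "x \<in> space (?P J)"
    have "(\<lambda>y. H (x(i := y))) \<in> borel_measurable borel"
      using measurable_comp[OF upd1[OF x] Hm] by (simp add: comp_def)
    then show "(\<integral>\<^sup>+y. H (x(i := y)) \<partial>lborel) = ennreal c * \<integral>\<^sup>+y. H (x(i := c * y)) \<partial>lborel"
      using nn_integral_real_affine[of "\<lambda>y. H (x(i := y))" c 0] c by simp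
  qed
  also have "\<dots> = ennreal c * \<integral>\<^sup>+x. \<integral>\<^sup>+y. H (x(i := c * y)) \<partial>lborel \<partial>?P J"
    by (rule nn_integral_cmult) measurable
  also have "(\<integral>\<^sup>+x. \<integral>\<^sup>+y. H (x(i := c * y)) \<partial>lborel \<partial>?P J) = \<integral>\<^sup>+y. \<integral>\<^sup>+x. H (x(i := c * y)) \<partial>?P J \<partial>lborel"
  proof -
    have "(\<lambda>z. H ((fst z)(i := c * snd z))) \<in> borel_measurable (?P J \<Otimes>\<^sub>M lborel)"
      using measurable_comp[OF upd Hm] by (simp add: comp_def)
    from PS.Fubini[OF this] show ?thesis by simp
  qed
  also have "\<dots> = \<integral>\<^sup>+y. ennreal (c ^ card J) * \<integral>\<^sup>+x. H (restrict (\<lambda>p. c * (x(i := y)) p) (insert i J)) \<partial>?P J \<partial>lborel"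
  proof (rule nn_integral_cong)
    fix y :: real
    have m: "(\<lambda>x. H (x(i := c * y))) \<in> borel_measurable (?P J)"
      using measurable_comp[OF upd2 Hm] by (simp add: comp_def)
    have e: "(restrict (\<lambda>p. c * x p) J)(i := c * y) = restrict (\<lambda>p. c * (x(i := y)) p) (insert i J)" for x
      using insert.hyps(2) by (auto simp: fun_eq_iff restrict_def)
    show "(\<integral>\<^sup>+x. H (x(i := c * y)) \<partial>?P J) = ennreal (c ^ card J) * \<integral>\<^sup>+x. H (restrict (\<lambda>p. c * (x(i := y)) p) (insert i J)) \<partial>?P J"
      unfolding e[symmetric] by (rule insert.IH[OF m])
  qed
  also have "\<dots> = ennreal (c ^ card J) * \<integral>\<^sup>+y. \<integral>\<^sup>+x. H (restrict (\<lambda>p. c * (x(i := y)) p) (insert i J)) \<partial>?P J \<partial>lborel"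
    by (rule nn_integral_cmult) measurable
  also have "(\<integral>\<^sup>+y. \<integral>\<^sup>+x. H (restrict (\<lambda>p. c * (x(i := y)) p) (insert i J)) \<partial>?P J \<partial>lborel)
      = \<integral>\<^sup>+x. H (restrict (\<lambda>p. c * x p) (insert i J)) \<partial>?P (insert i J)"
    by (rule product_nn_integral_insert_rev[symmetric]) (use insert in auto)
  finally have *: "integral\<^sup>N (?P (insert i J)) H = ennreal c * (ennreal (c ^ card J) *
      (\<integral>\<^sup>+x. H (restrict (\<lambda>p. c * x p) (insert i J)) \<partial>?P (insert i J)))" .
  have **: "ennreal (c ^ card (insert i J)) = ennreal c * ennreal (c ^ card J)"
    using insert.hyps c by (simp add: ennreal_mult')
  show ?case unfolding ** * by (simp only: mult.assoc)
qed

lemma radial_integral: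
  fixes J :: "'i set" and G :: "real \<Rightarrow> ennreal"
  assumes fin: "finite J" and ne: "J \<noteq> {}" and G[measurable]: "G \<in> borel_measurable borel"
  shows "(\<integral>\<^sup>+a. G (\<Sum>p\<in>J. (a p)\<^sup>2) \<partial>PiM J (\<lambda>_. lborel)) =
         \<integral>\<^sup>+s. ennreal (pi powr (real (card J) / 2) / Gamma (real (card J) / 2)
              * indicator {0<..} s * s powr (real (card J) / 2 - 1)) * G s \<partial>lborel"
    (is "?L = ?R")
proof -
  have R[measurable]: "(\<lambda>a. \<Sum>p\<in>J. (a p)\<^sup>2) \<in> borel_measurable (PiM J (\<lambda>_. lborel::real measure))"
    by measurable
  have "(\<integral>\<^sup>+a. G (\<Sum>p\<in>J. (a p)\<^sup>2) \<partial>PiM J (\<lambda>_. lborel)) =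
        integral\<^sup>N (distr (PiM J (\<lambda>_. lborel)) borel (\<lambda>a. \<Sum>p\<in>J. (a p)\<^sup>2)) G"
    by (rule nn_integral_distr[symmetric]) auto
  also have "\<dots> = ?R" unfolding radial_distr[OF fin ne]
    by (rule nn_integral_density) auto
  finally show ?thesis .
qed

lemma comp_meas:
  assumes "p \<in> J"
  shows "(\<lambda>x. x p) \<in> borel_measurable (PiM J (\<lambda>_. lborel::real measure))"
  using measurable_component_singleton[OF assms, of "\<lambda>_. lborel::real measure"] by simp

lemma blk_sqnorm_meas:
  assumes "\<And>j. j < n i \<Longrightarrow> (i, j) \<in> J"
  shows "(\<lambda>x. blk_sqnorm n x i) \<in> borel_measurable (PiM J (\<lambda>_. lborel))"
  unfolding blk_sqnorm_def using assms
  by (intro borel_measurable_sum borel_measurable_power comp_meas) auto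

lemma blk_sqnorm_nonneg: "blk_sqnorm n x i \<ge> 0"
  unfolding blk_sqnorm_def by (auto intro: sum_nonneg)

lemma powr_m2: "(s::real) > 0 \<Longrightarrow> s powr (-2) = 1 / s\<^sup>2"
  by (simp add: powr_minus powr_numeral divide_inverse)

theorem mainTheorem2:
  fixes k :: nat and n :: "nat \<Rightarrow> nat" and \<sigma> :: "nat \<Rightarrow> real" and h :: "real \<Rightarrow> real"
    and M :: "'a measure" and X :: "'a \<Rightarrow> (nat \<times> nat \<Rightarrow> real)"
  assumes "k \<ge> 1"
    and "\<forall>i\<le>k. n i > 0"
    and "\<forall>i\<le>k. \<sigma> i > 0"
    and "\<forall>r\<ge>0. h r \<ge> 0"
    and "prob_space M"
    and "distributed M (PiM (blk_idx k n) (\<lambda>_. lborel)) X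
           (\<lambda>x. ennreal ((\<Prod>i\<le>k. \<sigma> i powr (- real (n i)))
                 * h (\<Sum>i\<le>k. \<sigma> i powr (-2) * blk_sqnorm n x i)))"
  shows "distributed M (lborel \<Otimes>\<^sub>M PiM (blk_idx1 k n) (\<lambda>_. lborel))
           (\<lambda>\<omega>. (blk_sqnorm n (X \<omega>) 0,
                  restrict (\<lambda>p. blk_sqnorm n (X \<omega>) 0 powr (-1/2) * X \<omega> p) (blk_idx1 k n)))
           (\<lambda>(s, t). ennreal (indicator {0<..} s *
              (pi powr (real (n 0) / 2) / (Gamma (real (n 0) / 2) * (\<Prod>i\<le>k. \<sigma> i powr real (n i)))
               * s powr (real (\<Sum>i\<le>k. n i) / 2 - 1)
               * h (\<sigma> 0 powr (-2) * (1 + \<sigma> 0 powr 2 * (\<Sum>i\<in>{1..k}. \<sigma> i powr (-2) * blk_sqnorm n t i)) * s))))"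
proof -
  note npos = assms(2)[rule_format] and spos = assms(3)[rule_format] and hpos = assms(4)[rule_format]
  define I where "I = blk_idx k n"
  define I0 where "I0 = {0::nat} \<times> {..<n 0}"
  define I1 where "I1 = blk_idx1 k n"
  let ?P = "\<lambda>J. PiM J (\<lambda>_. lborel::real measure)"
  define N where "N = (lborel::real measure) \<Otimes>\<^sub>M ?P I1"
  define C where "C = (\<Prod>i\<le>k. \<sigma> i powr (- real (n i)))"
  define Q where "Q = (\<lambda>x. \<Sum>i\<le>k. \<sigma> i powr (-2) * blk_sqnorm n x i)"
  define f where "f = (\<lambda>x. ennreal (C * h (Q x)))"
  define S where "S = (\<lambda>x. blk_sqnorm n x 0)"
  define Y where "Y = (\<lambda>x. (S x, restrict (\<lambda>p. S x powr (-1/2) * x p) I1))"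
  define T where "T = (\<lambda>t. \<Sum>i\<in>{1..k}. \<sigma> i powr (-2) * blk_sqnorm n t i)"
  define K where "K = pi powr (real (n 0) / 2) / (Gamma (real (n 0) / 2) * (\<Prod>i\<le>k. \<sigma> i powr real (n i)))"
  define g where "g = (\<lambda>(s, t). ennreal (indicator {0<..} s * (K * s powr (real (\<Sum>i\<le>k. n i) / 2 - 1)
               * h (\<sigma> 0 powr (-2) * (1 + \<sigma> 0 powr 2 * T t) * s))))"
  have I1_eq: "I1 = Sigma {1..k} (\<lambda>i. {..<n i})"
    unfolding I1_def blk_idx1_def by auto
  have I_eq: "I = I0 \<union> I1"
    unfolding I_def I0_def I1_def blk_idx_def blk_idx1_def by (auto, metis Suc_leI neq0_conv)
  have I01: "I0 \<inter> I1 = {}"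
    unfolding I0_def I1_def blk_idx1_def by auto
  have finI0: "finite I0" and finI1: "finite I1" and finI: "finite I"
    unfolding I_eq I1_eq I0_def by auto
  have I0ne: "I0 \<noteq> {}" using npos[of 0] unfolding I0_def by auto
  have cardI0: "card I0 = n 0" unfolding I0_def by simp
  have cardI1: "card I1 = (\<Sum>i\<in>{1..k}. n i)" unfolding I1_eq by simp
  have C0: "C > 0" unfolding C_def
  proof (rule prod_pos)
    fix i assume "i \<in> {..k}"
    then have "\<sigma> i > 0" using spos by simp
    then show "0 < \<sigma> i powr - real (n i)" by simp
  qed
  have hyp: "distr M (?P I) X = density (?P I) f" "f \<in> borel_measurable (?P I)" "X \<in> measurable M (?P I)"
  proof -
    have "distributed M (?P I) X f" using assms(6) unfolding I_def f_def C_def Q_def .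
    then show "distr M (?P I) X = density (?P I) f" "f \<in> borel_measurable (?P I)" "X \<in> measurable M (?P I)"
      unfolding distributed_def by auto
  qed
  note Xm[measurable] = hyp(3)
  note fm[measurable] = hyp(2)
  have Sm[measurable]: "S \<in> borel_measurable (?P I)"
    unfolding S_def by (rule blk_sqnorm_meas) (auto simp: I_def blk_idx_def)
  have Ym[measurable]: "Y \<in> measurable (?P I) N"
    unfolding Y_def N_def
  proof (intro measurable_Pair)
    show "S \<in> measurable (?P I) lborel" using Sm by simp
    show "(\<lambda>x. restrict (\<lambda>p. S x powr (-1/2) * x p) I1) \<in> measurable (?P I) (?P I1)"
    proof (rule measurable_restrict)
      fix p assume "p \<in> I1"
      then have "p \<in> I" unfolding I_eq by auto
      then show "(\<lambda>x. S x powr (-1/2) * x p) \<in> measurable (?P I) lborel"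
        using Sm comp_meas[of p I] by simp
    qed
  qed
  interpret PSF: product_sigma_finite "\<lambda>_. lborel::real measure" by standard
  interpret FI1: finite_product_sigma_finite "\<lambda>_. lborel::real measure" I1
    by standard (rule finI1)
  have s0: "\<sigma> 0 > 0" using spos by simp
  have Tm[measurable]: "T \<in> borel_measurable (?P I1)"
    unfolding T_def
    by (intro borel_measurable_sum borel_measurable_times borel_measurable_const blk_sqnorm_meas)
       (auto simp: I1_def blk_idx1_def)
  have Tnn: "T t \<ge> 0" for t
    unfolding T_def using spos by (auto intro!: sum_nonneg mult_nonneg_nonneg blk_sqnorm_nonneg)
  (* measurable version of h *)
  define e where "e = (\<lambda>r::real. restrict (\<lambda>p. if p = (0,0) then \<sigma> 0 * r else 0) I)"
  have em[measurable]: "e \<in> measurable lborel (?P I)"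
    unfolding e_def by (intro measurable_restrict) auto
  have Qe: "Q (e r) = r\<^sup>2" for r
  proof -
    have b0: "blk_sqnorm n (e r) 0 = (\<sigma> 0 * r)\<^sup>2"
    proof -
      have "blk_sqnorm n (e r) 0 = (\<Sum>j<n 0. if j = 0 then (\<sigma> 0 * r)\<^sup>2 else 0)"
        unfolding blk_sqnorm_def
        by (rule sum.cong) (auto simp: e_def I_def blk_idx_def)
      also have "\<dots> = (\<sigma> 0 * r)\<^sup>2" using npos[of 0] by simp
      finally show ?thesis .
    qed
    have bi: "blk_sqnorm n (e r) i = 0" if "1 \<le> i" "i \<le> k" for i
      unfolding blk_sqnorm_def using that
      by (intro sum.neutral) (auto simp: e_def I_def blk_idx_def)
    have "Q (e r) = \<sigma> 0 powr (-2) * blk_sqnorm n (e r) 0 + (\<Sum>i\<in>{1..k}. \<sigma> i powr (-2) * blk_sqnorm n (e r) i)"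
      unfolding Q_def by (subst atMost_atLeast0, subst sum.atLeast_Suc_atMost) auto
    also have "\<dots> = r\<^sup>2" using s0 by (simp add: b0 bi powr_m2 power_mult_distrib)
    finally show ?thesis .
  qed
  define F where "F = (\<lambda>r. f (e r))"
  have Fm[measurable]: "F \<in> borel_measurable borel"
    unfolding F_def using measurable_comp[OF em fm] by (simp add: comp_def)
  define E where "E = (\<lambda>u. F (sqrt u))"
  have Em[measurable]: "E \<in> borel_measurable borel" unfolding E_def by measurable
  have E_eq: "E u = ennreal (C * h u)" if "u \<ge> 0" for u
    using that by (simp add: E_def F_def f_def Qe)
  define a where "a = real (\<Sum>i\<le>k. n i) / 2 - 1"
  define arg where "arg = (\<lambda>s t. \<sigma> 0 powr (-2) * (1 + \<sigma> 0 powr 2 * T t) * s)"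
  have G0: "Gamma (real (n 0) / 2) > 0" using npos[of 0] by simp
  have K0: "K \<ge> 0" unfolding K_def using spos G0
    by (intro divide_nonneg_nonneg mult_nonneg_nonneg prod_nonneg) auto
  have g_alt: "g = (\<lambda>z. ennreal (indicator {0<..} (fst z) * (K / C) * fst z powr a) * E (arg (fst z) (snd z)))"
  proof
    fix z :: "real \<times> (nat \<times> nat \<Rightarrow> real)"
    obtain s t where z: "z = (s, t)" by (cases z)
    show "g z = ennreal (indicator {0<..} (fst z) * (K / C) * fst z powr a) * E (arg (fst z) (snd z))"
    proof (cases "s > 0")
      case True
      have "arg s t \<ge> 0" unfolding arg_def using True Tnn[of t] by auto
      then have "E (arg s t) = ennreal (C * h (arg s t))" by (rule E_eq)
      moreover have "K / C * s powr a * (C * h (arg s t)) = K * s powr a * h (arg s t)"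
        using C0 by (simp add: field_simps)
      ultimately show ?thesis using True K0 C0
        by (simp add: z g_def arg_def a_def ennreal_mult'[symmetric] mult.assoc)
    next
      case False
      then show ?thesis by (simp add: z g_def)
    qed
  qed
  have gm[measurable]: "g \<in> borel_measurable N"
    unfolding g_alt N_def arg_def by measurable
  have YXm: "(\<lambda>\<omega>. Y (X \<omega>)) \<in> measurable M N" by measurable
  have KEY: "(\<integral>\<^sup>+x. f x * \<Phi> (Y x) \<partial>?P I) = (\<integral>\<^sup>+z. g z * \<Phi> z \<partial>N)"
    if \<Phi>m[measurable]: "\<Phi> \<in> borel_measurable N" for \<Phi>
  proof -
    define S0 where "S0 = (\<lambda>a. blk_sqnorm n a 0)"
    define H where "H = (\<lambda>r b. E (\<sigma> 0 powr (-2) * r + T b) * \<Phi> (r, restrict (\<lambda>p. r powr (-1/2) * b p) I1))"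
    define \<Psi> where "\<Psi> = (\<lambda>r. \<integral>\<^sup>+b. H r b \<partial>?P I1)"
    have Hm[measurable]: "case_prod H \<in> borel_measurable (lborel \<Otimes>\<^sub>M ?P I1)"
    proof -
      have "(\<lambda>z::real \<times> (nat \<times> nat \<Rightarrow> real). (fst z, restrict (\<lambda>p. fst z powr (-1/2) * snd z p) I1))
          \<in> measurable (lborel \<Otimes>\<^sub>M ?P I1) N"
        unfolding N_def
      proof (intro measurable_Pair)
        show "(\<lambda>z. restrict (\<lambda>p. fst z powr (-1/2) * snd z p) I1) \<in> measurable (lborel \<Otimes>\<^sub>M ?P I1) (?P I1)"
        proof (rule measurable_restrict)
          fix p assume "p \<in> I1"
          then have [measurable]: "(\<lambda>z. snd z p) \<in> borel_measurable (lborel \<Otimes>\<^sub>M ?P I1)"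
            using measurable_comp[OF measurable_snd comp_meas[of p I1]] by (simp add: comp_def)
          show "(\<lambda>z. fst z powr (-1/2) * snd z p) \<in> measurable (lborel \<Otimes>\<^sub>M ?P I1) lborel"
            by measurable
        qed
      qed simp
      from measurable_comp[OF this \<Phi>m] show ?thesis
        unfolding H_def by (simp add: comp_def case_prod_beta)
    qed
    have \<Psi>m[measurable]: "\<Psi> \<in> borel_measurable borel"
      unfolding \<Psi>_def using FI1.borel_measurable_nn_integral[OF Hm] by simp
    have "(\<integral>\<^sup>+x. f x * \<Phi> (Y x) \<partial>?P I) =
          (\<integral>\<^sup>+a. \<integral>\<^sup>+b. f (merge I0 I1 (a, b)) * \<Phi> (Y (merge I0 I1 (a, b))) \<partial>?P I1 \<partial>?P I0)"
      unfolding I_eq by (rule PSF.product_nn_integral_fold[OF I01 finI0 finI1]) (simp add: I_eq[symmetric])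
    also have "\<dots> = (\<integral>\<^sup>+a. \<Psi> (S0 a) \<partial>?P I0)"
    proof (rule nn_integral_cong)
      fix a assume a: "a \<in> space (?P I0)"
      show "(\<integral>\<^sup>+b. f (merge I0 I1 (a, b)) * \<Phi> (Y (merge I0 I1 (a, b))) \<partial>?P I1) = \<Psi> (S0 a)"
        unfolding \<Psi>_def
      proof (rule nn_integral_cong)
        fix b assume b: "b \<in> space (?P I1)"
        define m where "m = merge I0 I1 (a, b)"
        have mS: "S m = S0 a"
          unfolding S_def S0_def blk_sqnorm_def m_def
          by (rule sum.cong) (auto simp: merge_def I0_def)
        have mi: "blk_sqnorm n m i = blk_sqnorm n b i" if "1 \<le> i" "i \<le> k" for i
          unfolding blk_sqnorm_def m_def using that
          by (intro sum.cong) (auto simp: merge_def I0_def I1_def blk_idx1_def)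
        have mQ: "Q m = \<sigma> 0 powr (-2) * S0 a + T b"
        proof -
          have "Q m = \<sigma> 0 powr (-2) * blk_sqnorm n m 0 + (\<Sum>i\<in>{1..k}. \<sigma> i powr (-2) * blk_sqnorm n m i)"
            unfolding Q_def by (subst atMost_atLeast0, subst sum.atLeast_Suc_atMost) auto
          also have "\<dots> = \<sigma> 0 powr (-2) * S0 a + T b"
            using mS unfolding T_def S_def by (auto intro!: sum.cong simp: mi)
          finally show ?thesis .
        qed
        have mY: "Y m = (S0 a, restrict (\<lambda>p. S0 a powr (-1/2) * b p) I1)"
          unfolding Y_def mS using I01
          by (auto simp: m_def merge_def fun_eq_iff restrict_def)
        have "Q m \<ge> 0" unfolding mQ S0_def using spos Tnn[of b]
          by (auto intro!: add_nonneg_nonneg mult_nonneg_nonneg blk_sqnorm_nonneg)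
        then have "f m = E (Q m)" by (simp add: E_eq f_def)
        then show "f (merge I0 I1 (a, b)) * \<Phi> (Y (merge I0 I1 (a, b))) = H (S0 a) b"
          unfolding m_def[symmetric] H_def mY mQ by simp
      qed
    qed
    also have "\<dots> = (\<integral>\<^sup>+a. \<Psi> (\<Sum>p\<in>I0. (a p)\<^sup>2) \<partial>?P I0)"
    proof (rule nn_integral_cong)
      fix a :: "nat \<times> nat \<Rightarrow> real"
      have "(\<Sum>p\<in>I0. (a p)\<^sup>2) = (\<Sum>j<n 0. (a (0, j))\<^sup>2)"
      proof -
        have im: "I0 = (\<lambda>j. (0::nat, j)) ` {..<n 0}" unfolding I0_def by auto
        show ?thesis unfolding im by (subst sum.reindex) (auto simp: inj_on_def)
      qed
      then show "\<Psi> (S0 a) = \<Psi> (\<Sum>p\<in>I0. (a p)\<^sup>2)" by (simp add: S0_def blk_sqnorm_def)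
    qed
    also have "\<dots> = \<integral>\<^sup>+r. ennreal (pi powr (real (n 0) / 2) / Gamma (real (n 0) / 2)
              * indicator {0<..} r * r powr (real (n 0) / 2 - 1)) * \<Psi> r \<partial>lborel"
      using radial_integral[OF finI0 I0ne \<Psi>m] by (simp add: cardI0)
    also have "\<dots> = \<integral>\<^sup>+r. \<integral>\<^sup>+t. g (r, t) * \<Phi> (r, t) \<partial>?P I1 \<partial>lborel"
    proof (rule nn_integral_cong)
      fix r :: real
      show "ennreal (pi powr (real (n 0) / 2) / Gamma (real (n 0) / 2)
              * indicator {0<..} r * r powr (real (n 0) / 2 - 1)) * \<Psi> r =
            \<integral>\<^sup>+t. g (r, t) * \<Phi> (r, t) \<partial>?P I1"
      proof (cases "r > 0")
        case False
        then have "g (r, t) = 0" for t by (simp add: g_def)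
        with False show ?thesis by simp
      next
        case True
        define c0 where "c0 = pi powr (real (n 0) / 2) / Gamma (real (n 0) / 2)"
        have c00: "c0 \<ge> 0" unfolding c0_def using G0 by simp
        have Hr[measurable]: "H r \<in> borel_measurable (?P I1)"
          using measurable_compose_Pair1[OF _ Hm, of r] by simp
        have Tsc: "T (restrict (\<lambda>p. sqrt r * t p) I1) = r * T t" for t
        proof -
          have "blk_sqnorm n (restrict (\<lambda>p. sqrt r * t p) I1) i = r * blk_sqnorm n t i"
            if "i \<in> {1..k}" for i
            unfolding blk_sqnorm_def sum_distrib_left using that True
            by (intro sum.cong) (auto simp: I1_def blk_idx1_def power_mult_distrib)
          then show ?thesis unfolding T_def sum_distrib_left
            by (intro sum.cong) auto
        qed
        have rr: "r powr (-1/2) * sqrt r = 1"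
          using True by (simp add: powr_half_sqrt[symmetric] powr_add[symmetric])
        have Rsc: "restrict (\<lambda>p. r powr (-1/2) * restrict (\<lambda>p. sqrt r * t p) I1 p) I1 = t"
          if "t \<in> space (?P I1)" for t
        proof
          fix p show "restrict (\<lambda>p. r powr (-1/2) * restrict (\<lambda>p. sqrt r * t p) I1 p) I1 p = t p"
            using that rr by (cases "p \<in> I1"; cases p) (auto simp: space_PiM PiE_def extensional_def mult.assoc[symmetric])
        qed
        have "\<Psi> r = ennreal (sqrt r ^ card I1) * \<integral>\<^sup>+t. H r (restrict (\<lambda>p. sqrt r * t p) I1) \<partial>?P I1"
          unfolding \<Psi>_def using True by (intro scale_PiM[OF finI1]) auto
        also have "(\<integral>\<^sup>+t. H r (restrict (\<lambda>p. sqrt r * t p) I1) \<partial>?P I1) =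
            \<integral>\<^sup>+t. E (\<sigma> 0 powr (-2) * r + r * T t) * \<Phi> (r, t) \<partial>?P I1"
          by (intro nn_integral_cong) (simp only: H_def Tsc Rsc)
        finally have Pr: "\<Psi> r = ennreal (sqrt r ^ card I1) * \<integral>\<^sup>+t. E (\<sigma> 0 powr (-2) * r + r * T t) * \<Phi> (r, t) \<partial>?P I1" .
        have PC: "C * (\<Prod>i\<le>k. \<sigma> i powr real (n i)) = 1"
        proof -
          have "C * (\<Prod>i\<le>k. \<sigma> i powr real (n i)) = (\<Prod>i\<le>k. \<sigma> i powr (- real (n i)) * \<sigma> i powr real (n i))"
            unfolding C_def by (simp add: prod.distrib)
          also have "\<dots> = (\<Prod>i\<le>k. 1)"
          proof (rule prod.cong)
            fix i assume "i \<in> {..k}"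
            then have "\<sigma> i > 0" using spos by simp
            then show "\<sigma> i powr (- real (n i)) * \<sigma> i powr real (n i) = 1"
              by (simp add: powr_add[symmetric])
          qed simp
          finally show ?thesis by simp
        qed
        have cK: "c0 * C = K"
        proof -
          have "(\<Prod>i\<le>k. \<sigma> i powr real (n i)) \<noteq> 0" using PC by (metis mult_zero_right zero_neq_one)
          then have "C = 1 / (\<Prod>i\<le>k. \<sigma> i powr real (n i))" using PC by (simp add: field_simps)
          then show ?thesis unfolding K_def c0_def by simp
        qed
        have sum_n: "real (\<Sum>i\<le>k. n i) = real (n 0) + real (card I1)"
          unfolding cardI1 by (subst atMost_atLeast0, subst sum.atLeast_Suc_atMost) auto
        have e1: "sqrt r ^ card I1 = r powr (real (card I1) / 2)"
          using True by (simp add: powr_half_sqrt[symmetric] powr_realpow[symmetric] powr_powr)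
        have e2: "real (n 0) / 2 - 1 + real (card I1) / 2 = a"
          unfolding a_def sum_n by (simp add: field_simps)
        have ra: "r powr (real (n 0) / 2 - 1) * sqrt r ^ card I1 = r powr a"
          unfolding e1 by (subst powr_add[symmetric]) (simp only: e2)
        have "ennreal (c0 * indicator {0<..} r * r powr (real (n 0) / 2 - 1)) * \<Psi> r =
              \<integral>\<^sup>+t. ennreal (c0 * r powr (real (n 0) / 2 - 1) * sqrt r ^ card I1) *
                   (E (\<sigma> 0 powr (-2) * r + r * T t) * \<Phi> (r, t)) \<partial>?P I1"
        proof -
          have ind: "c0 * indicator {0<..} r * r powr (real (n 0) / 2 - 1) = c0 * r powr (real (n 0) / 2 - 1)"
            using True by simp
          have nn: "c0 * r powr (real (n 0) / 2 - 1) \<ge> 0" using c00 by simp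
          have mm: "(\<lambda>t. E (\<sigma> 0 powr (-2) * r + r * T t) * \<Phi> (r, t)) \<in> borel_measurable (?P I1)"
          proof -
            have [measurable]: "(\<lambda>t. \<Phi> (r, t)) \<in> borel_measurable (?P I1)"
              using measurable_compose_Pair1[OF _ \<Phi>m[unfolded N_def], of r] by simp
            show ?thesis by measurable
          qed
          have "ennreal (c0 * indicator {0<..} r * r powr (real (n 0) / 2 - 1)) * \<Psi> r
              = ennreal (c0 * r powr (real (n 0) / 2 - 1)) * (ennreal (sqrt r ^ card I1) *
                 \<integral>\<^sup>+t. E (\<sigma> 0 powr (-2) * r + r * T t) * \<Phi> (r, t) \<partial>?P I1)"
            by (simp only: ind Pr)
          also have "\<dots> = ennreal (c0 * r powr (real (n 0) / 2 - 1) * sqrt r ^ card I1) *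
                 \<integral>\<^sup>+t. E (\<sigma> 0 powr (-2) * r + r * T t) * \<Phi> (r, t) \<partial>?P I1"
            by (subst ennreal_mult'[OF nn]) (rule mult.assoc[symmetric])
          also have "\<dots> = \<integral>\<^sup>+t. ennreal (c0 * r powr (real (n 0) / 2 - 1) * sqrt r ^ card I1) *
                   (E (\<sigma> 0 powr (-2) * r + r * T t) * \<Phi> (r, t)) \<partial>?P I1"
            by (rule nn_integral_cmult[symmetric, OF mm])
          finally show ?thesis .
        qed
        also have "\<dots> = \<integral>\<^sup>+t. g (r, t) * \<Phi> (r, t) \<partial>?P I1"
        proof (rule nn_integral_cong)
          fix t
          have u0: "\<sigma> 0 powr (-2) * r + r * T t \<ge> 0" using True Tnn[of t] by simp
          have ua: "\<sigma> 0 powr (-2) * r + r * T t = \<sigma> 0 powr (-2) * (1 + \<sigma> 0 powr 2 * T t) * r"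
            using s0 by (simp add: powr_m2 field_simps)
          have "ennreal (c0 * r powr (real (n 0) / 2 - 1) * sqrt r ^ card I1) * E (\<sigma> 0 powr (-2) * r + r * T t)
              = ennreal (K * r powr a * h (\<sigma> 0 powr (-2) * (1 + \<sigma> 0 powr 2 * T t) * r))"
            unfolding E_eq[OF u0] ua[symmetric] cK[symmetric] ra[symmetric]
            using c00 True C0 hpos[OF u0]
            by (subst ennreal_mult'[symmetric]) (auto simp: mult_ac)
          also have "\<dots> = g (r, t)" using True by (simp add: g_def a_def)
          finally show "ennreal (c0 * r powr (real (n 0) / 2 - 1) * sqrt r ^ card I1) *
                   (E (\<sigma> 0 powr (-2) * r + r * T t) * \<Phi> (r, t)) = g (r, t) * \<Phi> (r, t)"
            by (simp add: mult.assoc[symmetric])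
        qed
        finally show ?thesis unfolding c0_def .
      qed
    qed
    also have "\<dots> = (\<integral>\<^sup>+z. g z * \<Phi> z \<partial>N)"
    proof -
      have m: "(\<lambda>z. g z * \<Phi> z) \<in> borel_measurable N" by measurable
      show ?thesis using FI1.nn_integral_fst[OF m[unfolded N_def]] unfolding N_def by simp
    qed
    finally show ?thesis .
  qed
  have "distr M N (\<lambda>\<omega>. Y (X \<omega>)) = distr (distr M (?P I) X) N Y"
    by (subst distr_distr) (auto simp: comp_def)
  also have "\<dots> = distr (density (?P I) f) N Y" by (simp add: hyp(1))
  also have "\<dots> = density N g"
  proof (rule measure_eqI)
    show "sets (distr (density (?P I) f) N Y) = sets (density N g)" by simp
    fix A assume A: "A \<in> sets (distr (density (?P I) f) N Y)"
    then have A': "A \<in> sets N" by simp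
    have "emeasure (distr (density (?P I) f) N Y) A = emeasure (density (?P I) f) (Y -` A \<inter> space (?P I))"
      using A' by (subst emeasure_distr) auto
    also have "\<dots> = \<integral>\<^sup>+x. f x * indicator (Y -` A \<inter> space (?P I)) x \<partial>?P I"
      using A' by (subst emeasure_density) auto
    also have "\<dots> = \<integral>\<^sup>+x. f x * indicator A (Y x) \<partial>?P I"
      by (intro nn_integral_cong) (auto simp: indicator_def)
    also have "\<dots> = \<integral>\<^sup>+z. g z * indicator A z \<partial>N"
      by (rule KEY) (use A' in auto)
    also have "\<dots> = emeasure (density N g) A"
      using A' by (subst emeasure_density) auto
    finally show "emeasure (distr (density (?P I) f) N Y) A = emeasure (density N g) A" .
  qed
  finally have "distr M N (\<lambda>\<omega>. Y (X \<omega>)) = density N g" .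
  then have "distributed M N (\<lambda>\<omega>. Y (X \<omega>)) g"
    unfolding distributed_def using gm YXm by auto
  then show ?thesis
    unfolding N_def Y_def S_def g_def T_def K_def I1_def by simp
qed

end
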